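(* Let $m\ge2$, $1\le i\le m-1$, $0\le j\le 2p-1$, $0\le k\le m-1$. There is a unique integer $\ell$ with $-(m-1)p\le\ell\le(m+1)p-1$ such that $e^{\frac{\ell-i/m}{2p}\alpha}\in R(i,j,k)$. Moreover $e^{\frac{\ell-i/m}{2p}\alpha}$ is a lowest weight vector of $R(i,j,k)$ (of minimal conformal weight), and $$L(0)e^{\frac{\ell-i/m}{2p}\alpha}=h_{\ell+1-i/m,1}\,e^{\frac{\ell-i/m}{2p}\alpha},\qquad H(0)e^{\frac{\ell-i/m}{2p}\alpha}=\binom{\ell-i/m}{2p-1}e^{\frac{\ell-i/m}{2p}\alpha}.$$
   Context: Fix an integer $p\ge 2$. Let $L=\mathbb Z\alpha$ with $\langle\alpha,\alpha\rangle=2p$, $M(1)$ the Heisenberg vertex algebra, $V_L=M(1)\otimes\mathbb C[L]$ the lattice vertex algebra with conformal vector $\omega=\frac{1}{4p}\alpha(-1)^2\mathbf 1+\frac{p-1}{2p}\alpha(-2)\mathbf 1$, $L(n)=\omega_{n+1}$; $Q=e^\alpha_0$ is the screening operator; for $\gamma\in\mathbb Q\alpha$, $V_{L+\gamma}=M(1)\otimes\mathbb C[L+\gamma]$ with the usual vertex operators. $H=Qe^{-\alpha}$ has conformal weight $2p-1$, and $H(0)=H_{2p-2}$ denotes its zero mode. Put $h_{r,s}=\frac{(ps-r)^2-(p-1)^2}{4p}$ (for arbitrary complex $r$), and $\binom{x}{n}=x(x-1)\cdots(x-n+1)/n!$. For $1\le i\le m-1$, $0\le j\le2p-1$, $0\le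 k\le m-1$, $R(i,j,k)=\bigoplus_{s\in\mathbb Z}M(1)\otimes e^{\frac{j-i/m}{2p}\alpha+(ms+k)\alpha}$, a module for $\mathcal W(p)^{A_m}=\mathcal W(p)\cap\bigoplus_nM(1)\otimes e^{nm\alpha}$, where $\mathcal W(p)$ is the triplet vertex algebra (the Virasoro submodule of $V_L$ generated by $Q^ie^{-n\alpha}$, $0\le i\le2n$). *)

theory Defs
  imports Complex_Main "HOL-Library.Multiset"
begin

text \<open>
Concrete model of the generalized lattice vertex algebra
V = direct sum over c in Q of M(1) tensor e^{c alpha}, with <alpha,alpha> = 2p.
A vector is a finitely supported function  v c M,  where c :: rat labels e^{c alpha}
and the multiset M of naturals labels the monomial prod_{x in M} alpha(-(x+1)) 1 of M(1).
\<close>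

type_synonym vec = "rat \<Rightarrow> nat multiset \<Rightarrow> complex"

definition zvec :: vec where "zvec = (\<lambda>_ _. 0)"

definition scale :: "complex \<Rightarrow> vec \<Rightarrow> vec" where
  "scale a v = (\<lambda>c M. a * v c M)"

definition vsum :: "('i \<Rightarrow> vec) \<Rightarrow> 'i set \<Rightarrow> vec" where
  "vsum f I = (\<lambda>c M. \<Sum>x\<in>I. f x c M)"

definition supp :: "vec \<Rightarrow> (rat \<times> nat multiset) set" where
  "supp v = {(c, M). v c M \<noteq> 0}"

definition bv :: "rat \<Rightarrow> nat multiset \<Rightarrow> vec" where
  "bv c M = (\<lambda>c' M'. if c' = c \<and> M' = M then 1 else 0)"

definition linext :: "(rat \<Rightarrow> nat multiset \<Rightarrow> vec) \<Rightarrow> vec \<Rightarrow> vec" where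
  "linext T v = (\<lambda>c M. \<Sum>(c', M')\<in>supp v. v c' M' * T c' M' c M)"

definition deg :: "nat multiset \<Rightarrow> nat" where
  "deg M = (\<Sum>x\<in>#M. x + 1)"

text \<open>Heisenberg modes alpha(k), [alpha(a),alpha(b)] = 2p a delta_{a+b,0};
  alpha(0) acts on M(1) tensor e^{c alpha} by <alpha, c alpha> = 2pc.\<close>
definition amode :: "nat \<Rightarrow> int \<Rightarrow> vec \<Rightarrow> vec" where
  "amode p k v = (\<lambda>c M.
     if k < 0 then (if nat (-k) - 1 \<in># M then v c (M - {#nat (-k) - 1#}) else 0)
     else if k = 0 then of_nat (2*p) * of_rat c * v c M
     else of_nat (2*p) * of_int k * of_nat (count M (nat k - 1) + 1) * v c (M + {#nat k - 1#}))"

definition aprod :: "nat \<Rightarrow> int list \<Rightarrow> vec \<Rightarrow> vec" where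
  "aprod p ks v = foldr (amode p) ks v"

text \<open>partitions: multiset lam (x stands for the part x+1); coefficient 1/(prod n^{m_n} m_n!)\<close>
definition pcoef :: "nat multiset \<Rightarrow> complex" where
  "pcoef lam = 1 / (of_nat (\<Prod>x\<in>#lam. x + 1) * of_nat (\<Prod>x\<in>set_mset lam. fact (count lam x)))"

text \<open>coefficient of z^d in E^-(-b alpha, z) = exp(sum_{n>0} b alpha(-n) z^n / n)\<close>
definition Sminus :: "nat \<Rightarrow> rat \<Rightarrow> nat \<Rightarrow> vec \<Rightarrow> vec" where
  "Sminus p b d v = vsum (\<lambda>lam. scale (pcoef lam * (of_rat b) ^ size lam)
       (aprod p (map (\<lambda>x. - (int x + 1)) (sorted_list_of_multiset lam)) v)) {lam. deg lam = d}"

text \<open>coefficient of z^{-d} in E^+(-b alpha, z) = exp(- sum_{n>0} b alpha(n) z^{-n} / n)\<close>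
definition Tplus :: "nat \<Rightarrow> rat \<Rightarrow> nat \<Rightarrow> vec \<Rightarrow> vec" where
  "Tplus p b d v = vsum (\<lambda>lam. scale (pcoef lam * (- of_rat b) ^ size lam)
       (aprod p (map (\<lambda>x. int x + 1) (sorted_list_of_multiset lam)) v)) {lam. deg lam = d}"

text \<open>e_{b alpha}: u tensor e^{c alpha} |-> u tensor e^{(b+c) alpha} (trivial cocycle)\<close>
definition eshift :: "rat \<Rightarrow> vec \<Rightarrow> vec" where
  "eshift b v = (\<lambda>c M. v (c - b) M)"

text \<open>Modes of Y(e^{b alpha}, z) = E^-(-b alpha,z) E^+(-b alpha,z) e_{b alpha} z^{b alpha(0)}
  = sum_n (e^{b alpha})_n z^{-n-1} on a basis vector; n rational.\<close>
definition expmode_b :: "nat \<Rightarrow> rat \<Rightarrow> rat \<Rightarrow> rat \<Rightarrow> nat multiset \<Rightarrow> vec" where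
  "expmode_b p b n c M = vsum (\<lambda>d'.
      let d = of_nat d' - n - 1 - 2 * of_nat p * b * c in
      if d \<in> \<nat> then Sminus p b (nat \<lfloor>d\<rfloor>) (Tplus p b d' (eshift b (bv c M))) else zvec)
    {0..deg M}"

definition expmode :: "nat \<Rightarrow> rat \<Rightarrow> rat \<Rightarrow> vec \<Rightarrow> vec" where
  "expmode p b n v = linext (expmode_b p b n) v"

definition Qop :: "nat \<Rightarrow> vec \<Rightarrow> vec" where
  "Qop p = expmode p 1 0"

definition Hvec :: "nat \<Rightarrow> vec" where
  "Hvec p = Qop p (bv (-1) {#})"

text \<open>Modes of Y(w,z) for w = alpha(-k_1-1)...alpha(-k_r-1)1 in M(1):
  Y(w,z) = :d^{(k_1)}alpha(z) ... d^{(k_r)}alpha(z):, with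
  d^{(k)}alpha(z) = sum_j binom(-j-1,k) alpha(j) z^{-j-1-k}.
  The coefficient of z^{-N-1} acting on a basis vector: the sum over (j_1..j_r) is
  restricted to a box that contains all nonzero terms.\<close>
definition fmode_b :: "nat \<Rightarrow> nat multiset \<Rightarrow> int \<Rightarrow> rat \<Rightarrow> nat multiset \<Rightarrow> vec" where
  "fmode_b p K N c M =
    (let ks = sorted_list_of_multiset K; r = length ks;
         S = N + 1 - int r - int (sum_list ks);
         B = \<bar>S\<bar> + int (deg M) in
     vsum (\<lambda>js. scale (\<Prod>t<r. (of_int (- (js ! t) - 1) :: complex) gchoose (ks ! t))
                 (aprod p (filter (\<lambda>j. j < 0) js @ filter (\<lambda>j. 0 \<le> j) js) (bv c M)))
       {js. length js = r \<and> set js \<subseteq> {-B..B} \<and> sum_list js = S})"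

text \<open>N-th mode of Y(w,z) for w in M(1) = M(1) tensor e^0\<close>
definition fmode :: "nat \<Rightarrow> vec \<Rightarrow> int \<Rightarrow> vec \<Rightarrow> vec" where
  "fmode p w N v = linext (\<lambda>c M. vsum (\<lambda>K. scale (w 0 K) (fmode_b p K N c M)) {K. w 0 K \<noteq> 0}) v"

text \<open>conformal vector omega = 1/(4p) alpha(-1)^2 1 + (p-1)/(2p) alpha(-2) 1\<close>
definition omega :: "nat \<Rightarrow> vec" where
  "omega p = (\<lambda>c M. if c = 0 then
      (if M = {#0, 0#} then 1 / (4 * of_nat p)
       else if M = {#1#} then (of_nat p - 1) / (2 * of_nat p) else 0) else 0)"

definition L0 :: "nat \<Rightarrow> vec \<Rightarrow> vec" where
  "L0 p = fmode p (omega p) 1"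

definition H0 :: "nat \<Rightarrow> vec \<Rightarrow> vec" where
  "H0 p = fmode p (Hvec p) (2 * int p - 2)"

definition hrs :: "nat \<Rightarrow> complex \<Rightarrow> complex \<Rightarrow> complex" where
  "hrs p r s = ((of_nat p * s - r)^2 - (of_nat p - 1)^2) / (4 * of_nat p)"

definition Rmod :: "nat \<Rightarrow> nat \<Rightarrow> nat \<Rightarrow> nat \<Rightarrow> nat \<Rightarrow> vec set" where
  "Rmod p m i j k = {v. finite (supp v) \<and> (\<forall>c M. v c M \<noteq> 0 \<longrightarrow>
      (\<exists>s::int. c = (of_nat j - of_nat i / of_nat m) / (2 * of_nat p)
                     + of_nat m * of_int s + of_nat k))}"

definition evec :: "nat \<Rightarrow> nat \<Rightarrow> nat \<Rightarrow> int \<Rightarrow> vec" where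
  "evec p m i l = bv ((of_int l - of_nat i / of_nat m) / (2 * of_nat p)) {#}"

end

theory Submission
  imports Defs
begin

lemma bv_apply: "bv c M c' M' = (if c' = c \<and> M' = M then 1 else 0)"
  by (simp add: bv_def)

lemma supp_bv: "supp (bv c M) = {(c, M)}"
  by (auto simp: supp_def bv_def)

lemma linext_bv: "linext T (bv c M) = T c M"
  unfolding linext_def supp_bv by (simp add: bv_def)

lemma amode_scale: "amode p k (scale a v) = scale a (amode p k v)"
  by (auto simp: amode_def scale_def fun_eq_iff algebra_simps)

lemma amode_neg_bv:
  assumes "n \<ge> 1"
  shows "amode p (- int n) (bv c N) = bv c (N + {#n - 1#})"
  using assms by (auto simp: amode_def bv_def fun_eq_iff)

lemma amode_zero_bv: "amode p 0 (bv c M) = scale (of_nat (2*p) * of_rat c) (bv c M)"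
  by (auto simp: amode_def bv_def fun_eq_iff scale_def)

lemma amode_pos_bv:
  assumes "n \<ge> 1"
  shows "amode p (int n) (bv c M) = scale (of_nat (2*p) * of_nat n * of_nat (count M (n-1))) (bv c (M - {#n - 1#}))"
proof -
  have "amode p (int n) (bv c M) c' M' = scale (of_nat (2*p) * of_nat n * of_nat (count M (n-1))) (bv c (M - {#n - 1#})) c' M'" for c' M'
  proof (cases "c' = c \<and> M' + {#n-1#} = M")
    case True
    then show ?thesis using assms by (auto simp: amode_def bv_def scale_def)
  next
    case False
    then show ?thesis using assms
      by (auto simp: amode_def bv_def scale_def)
  qed
  then show ?thesis by (auto simp: fun_eq_iff)
qed


lemma deg_empty[simp]: "deg {#} = 0" by (simp add: deg_def)
lemma deg_add_mset[simp]: "deg (add_mset x M) = deg M + x + 1" by (simp add: deg_def)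
lemma deg_plus[simp]: "deg (M + N) = deg M + deg N" by (simp add: deg_def)

lemma deg_ge_size: "size M \<le> deg M"
  by (induction M) auto

lemma deg_elem: "x \<in># M \<Longrightarrow> x < deg M"
  by (induction M) auto

lemma deg_eq_0: "deg M = 0 \<longleftrightarrow> M = {#}"
  by (induction M) auto

lemma finite_Par: "finite {lam. deg lam = d}"
proof -
  have "{lam. deg lam = d} \<subseteq> (\<Union>n\<in>{0..d}. multisets_of_size {0..<d} n)"
    using deg_ge_size deg_elem by (fastforce simp: multisets_of_size_def)
  moreover have "finite (\<Union>n\<in>{0..d}. multisets_of_size {0..<d} n)" by auto
  ultimately show ?thesis by (rule finite_subset)
qed

lemma Par0: "{lam. deg lam = 0} = {{#}}"
  using deg_eq_0 by auto

lemma vsum_apply: "vsum f I c M = (\<Sum>x\<in>I. f x c M)" by (simp add: vsum_def)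
lemma scale_apply: "scale a v c M = a * v c M" by (simp add: scale_def)

lemma aprod_neg_bv:
  "aprod p (map (\<lambda>x. - int x - 1) xs) (bv c N) = bv c (N + mset xs)"
proof (induction xs)
  case Nil
  then show ?case by (simp add: aprod_def)
next
  case (Cons x xs)
  have a: "amode p (- int x - 1) (bv c N') = bv c (N' + {#x#})" for N'
  proof -
    have eq: "(- int x - 1::int) = - int (Suc x)" by simp
    show ?thesis by (subst eq, subst amode_neg_bv) simp_all
  qed
  show ?case
    using Cons by (simp add: aprod_def a)
qed

lemma pcoef_empty[simp]: "pcoef {#} = 1" by (simp add: pcoef_def)

lemma Hvec_0: "Hvec p 0 K = (if deg K = 2*p - 1 then pcoef K else 0)"
  if "p \<ge> 1"
proof -
  have e: "eshift 1 (bv (-1) {#}) = bv 0 {#}"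
    by (auto simp: eshift_def bv_def fun_eq_iff)
  have t: "Tplus p 1 0 (bv 0 {#}) = bv 0 {#}"
    by (simp add: Tplus_def Par0 vsum_def scale_def aprod_def)
  have d: "(of_nat (0::nat) - 0 - 1 - 2 * of_nat p * 1 * (-1) :: rat) = of_nat (2*p - 1)"
    using that by (simp add: of_nat_diff)
  have "Hvec p = expmode_b p 1 0 (-1) {#}"
    by (simp add: Hvec_def Qop_def expmode_def linext_bv)
  also have "\<dots> = (let d = (of_nat (0::nat) - 0 - 1 - 2 * of_nat p * 1 * (-1) :: rat) in if d \<in> \<nat> then Sminus p 1 (nat \<lfloor>d\<rfloor>) (Tplus p 1 0 (eshift 1 (bv (-1) {#}))) else zvec)"
    by (simp only: expmode_b_def deg_empty) (simp add: vsum_def)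
  also have "\<dots> = Sminus p 1 (2*p - 1) (bv 0 {#})"
    by (simp only: d Let_def e t) simp
  finally have H: "Hvec p = Sminus p 1 (2*p - 1) (bv 0 {#})" .
  have "Hvec p 0 K = (\<Sum>lam\<in>{lam. deg lam = 2*p-1}. pcoef lam * bv 0 lam 0 K)"
    unfolding H Sminus_def vsum_apply scale_apply by (simp add: aprod_neg_bv)
  also have "\<dots> = (if deg K = 2*p - 1 then pcoef K else 0)"
    by (simp add: bv_def finite_Par if_distrib[where f="\<lambda>x. _ * x"] sum.delta cong: if_cong)
  finally show ?thesis .
qed


definition wgt :: "complex \<Rightarrow> nat multiset \<Rightarrow> complex" where
  "wgt X K = pcoef K * (prod_mset (image_mset (\<lambda>x. (-1::complex) gchoose x) K) * X ^ size K)"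

lemma gchoose_m1: "((-1::complex) gchoose x) = (-1)^x"
  using gbinomial_negated_upper[of "-1::complex" x] by (simp add: binomial_gbinomial[symmetric])

lemma pf_superset:
  assumes "finite A" "set_mset M \<subseteq> A"
  shows "(\<Prod>y\<in>set_mset M. fact (count M y)) = (\<Prod>y\<in>A. (fact (count M y) :: nat))"
  using assms by (intro prod.mono_neutral_left) (auto simp: not_in_iff)

lemma pcoef_add:
  "pcoef (add_mset x K) * (of_nat (x+1) * of_nat (count (add_mset x K) x)) = pcoef K"
proof -
  let ?A = "insert x (set_mset K)"
  have f: "finite ?A" by simp
  have p1: "(\<Prod>y\<in>set_mset (add_mset x K). fact (count (add_mset x K) y))
      = fact (count (add_mset x K) x) * (\<Prod>y\<in>?A - {x}. (fact (count K y) :: nat))"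
    by (simp add: prod.insert_remove)
  have p2: "(\<Prod>y\<in>set_mset K. fact (count K y)) = fact (count K x) * (\<Prod>y\<in>?A - {x}. (fact (count K y)::nat))"
    apply (subst pf_superset[OF f]) apply auto[1]
    by (simp add: prod.insert_remove)
  define P where "P = (\<Prod>y\<in>?A - {x}. (fact (count K y)::nat))"
  define Q where "Q = prod_mset (image_mset Suc K)"
  have q1: "(\<Prod>y\<in>#K. y + 1) = Q" by (simp add: Q_def)
  have q2: "(\<Prod>y\<in>#add_mset x K. y + 1) = (x+1) * Q" by (simp add: Q_def)
  define c where "c = count K x"
  have P0: "P \<noteq> 0" unfolding P_def by (simp add: prod_zero_iff)
  have Q0: "Q \<noteq> 0" unfolding Q_def by (induction K) auto
  define M where "M = Q * (fact c * P)"
  have M0: "M \<noteq> 0" using P0 Q0 by (simp add: M_def)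
  have a: "pcoef (add_mset x K) = 1 / (of_nat ((x+1) * Suc c) * of_nat M)"
    unfolding pcoef_def p1 P_def[symmetric] q2 c_def M_def
    by (simp add: fact_Suc algebra_simps)
  have b: "pcoef K = 1 / of_nat M"
    unfolding pcoef_def p2 P_def[symmetric] q1 c_def M_def by (simp add: algebra_simps)
  have cc: "count (add_mset x K) x = Suc c" by (simp add: c_def)
  have nz: "(of_nat ((x+1) * Suc c) :: complex) \<noteq> 0" by (simp only: of_nat_eq_0_iff) simp
  have g: "\<And>A B::complex. A \<noteq> 0 \<Longrightarrow> B \<noteq> 0 \<Longrightarrow> 1/(A*B) * A = 1/B" by (simp add: field_simps)
  have M0': "(of_nat M :: complex) \<noteq> 0" using M0 by simp
  show ?thesis unfolding a b cc using g[OF nz M0'] by (simp only: of_nat_mult)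
qed

lemma wgt_add:
  "wgt X (add_mset x K) * (of_nat (x+1) * of_nat (count (add_mset x K) x)) = (-1)^x * X * wgt X K"
proof -
  have "wgt X (add_mset x K) * (of_nat (x+1) * of_nat (count (add_mset x K) x))
     = (pcoef (add_mset x K) * (of_nat (x+1) * of_nat (count (add_mset x K) x)))
       * ((-1)^x * X * (prod_mset (image_mset (\<lambda>x. (-1::complex) gchoose x) K) * X ^ size K))"
    by (simp add: wgt_def gchoose_m1 field_simps)
  also have "\<dots> = (-1)^x * X * wgt X K"
    by (simp only: pcoef_add) (simp add: wgt_def field_simps)
  finally show ?thesis .
qed

lemma deg_count:
  assumes "finite A" "set_mset K \<subseteq> A"
  shows "deg K = (\<Sum>x\<in>A. count K x * (x+1))"
  using assms
proof (induction K)
  case empty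
  then show ?case by simp
next
  case (add y K)
  then have yA: "y \<in> A" by auto
  have "(\<Sum>x\<in>A. count (add_mset y K) x * (x+1)) = (\<Sum>x\<in>A. count K x * (x+1) + (if x = y then y+1 else 0))"
    by (intro sum.cong) auto
  also have "\<dots> = (\<Sum>x\<in>A. count K x * (x+1)) + (y+1)"
    using yA add.prems by (simp add: sum.distrib sum.delta)
  finally show ?case using add by auto
qed


definition Fp :: "complex \<Rightarrow> nat \<Rightarrow> complex" where
  "Fp X n = (\<Sum>K\<in>{K. deg K = n}. wgt X K)"

lemma Fp0: "Fp X 0 = 1"
  by (simp add: Fp_def Par0 wgt_def)

lemma Fp_rec: "of_nat n * Fp X n = (\<Sum>x<n. (-1)^x * X * Fp X (n - x - 1))"
proof -
  let ?P = "\<lambda>n. {K. deg K = n}"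
  have "of_nat n * Fp X n = (\<Sum>K\<in>?P n. of_nat (deg K) * wgt X K)"
    by (simp add: Fp_def sum_distrib_left)
  also have "\<dots> = (\<Sum>K\<in>?P n. \<Sum>x<n. of_nat (count K x * (x+1)) * wgt X K)"
  proof (intro sum.cong refl)
    fix K assume "K \<in> ?P n"
    then have "deg K = (\<Sum>x<n. count K x * (x+1))"
      using deg_elem by (intro deg_count) auto
    then show "of_nat (deg K) * wgt X K = (\<Sum>x<n. of_nat (count K x * (x+1)) * wgt X K)"
      by (simp add: sum_distrib_right)
  qed
  also have "\<dots> = (\<Sum>x<n. \<Sum>K\<in>?P n. of_nat (count K x * (x+1)) * wgt X K)"
    by (rule sum.swap)
  also have "\<dots> = (\<Sum>x<n. (-1)^x * X * Fp X (n - x - 1))"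
  proof (intro sum.cong refl)
    fix x assume x: "x \<in> {..<n}"
    have sub: "add_mset x ` ?P (n - x - 1) \<subseteq> ?P n" using x by auto
    have "(\<Sum>K\<in>?P n. of_nat (count K x * (x+1)) * wgt X K)
        = (\<Sum>K\<in>add_mset x ` ?P (n - x - 1). of_nat (count K x * (x+1)) * wgt X K)"
    proof (rule sum.mono_neutral_right[OF finite_Par sub], intro ballI)
      fix K assume KK: "K \<in> ?P n - add_mset x ` ?P (n - x - 1)"
      then have "deg K = n" "K \<notin> add_mset x ` ?P (n - x - 1)" by auto
      have "x \<notin># K"
      proof
        assume xK: "x \<in># K"
        then have K: "K = add_mset x (K - {#x#})" by simp
        then have "deg K = deg (K - {#x#}) + x + 1" by (metis deg_add_mset)
        then have "deg (K - {#x#}) = n - x - 1" using \<open>deg K = n\<close> by simp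
        then have "K \<in> add_mset x ` ?P (n - x - 1)" using K by blast
        then show False using \<open>K \<notin> add_mset x ` ?P (n - x - 1)\<close> by blast
      qed
      then have "count K x = 0" by (simp add: not_in_iff)
      then show "of_nat (count K x * (x+1)) * wgt X K = 0" by simp
    qed
    also have "\<dots> = (\<Sum>K'\<in>?P (n - x - 1). of_nat (count (add_mset x K') x * (x+1)) * wgt X (add_mset x K'))"
      by (subst sum.reindex) (simp_all only: inj_on_def comp_def, auto)
    also have "\<dots> = (\<Sum>K'\<in>?P (n - x - 1). (-1)^x * X * wgt X K')"
      by (intro sum.cong refl, subst wgt_add[symmetric]) (simp add: algebra_simps)
    also have "\<dots> = (-1)^x * X * Fp X (n - x - 1)"
      by (simp add: Fp_def sum_distrib_left)
    finally show "(\<Sum>K\<in>?P n. of_nat (count K x * (x+1)) * wgt X K) = (-1)^x * X * Fp X (n - x - 1)" .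
  qed
  finally show ?thesis .
qed

lemma binom_rec: "of_nat n * (X gchoose n) = (\<Sum>x<n. (-1)^x * X * (X gchoose (n - x - 1)))"
  for X :: complex
proof (induction n)
  case 0
  then show ?case by simp
next
  case (Suc n)
  have "(\<Sum>x<Suc n. (-1)^x * X * (X gchoose (Suc n - x - 1)))
      = X * (X gchoose n) + (\<Sum>x<n. (-1)^(Suc x) * X * (X gchoose (Suc n - Suc x - 1)))"
    by (subst sum.lessThan_Suc_shift) simp
  also have "\<dots> = X * (X gchoose n) - (\<Sum>x<n. (-1)^x * X * (X gchoose (n - x - 1)))"
    by (simp add: sum_negf)
  also have "\<dots> = X * (X gchoose n) - of_nat n * (X gchoose n)"
    using Suc by simp
  also have "\<dots> = of_nat (Suc n) * (X gchoose Suc n)"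
    using gbinomial_mult_1[of X n] by simp
  finally show ?case by simp
qed

lemma Fp_binom: "Fp X n = X gchoose n"
proof (induction n rule: less_induct)
  case (less n)
  show ?case
  proof (cases "n = 0")
    case True
    then show ?thesis by (simp add: Fp0)
  next
    case False
    have "of_nat n * Fp X n = of_nat n * (X gchoose n)"
      unfolding Fp_rec binom_rec
      using less False by (intro sum.cong refl) auto
    then show ?thesis using False by simp
  qed
qed


lemma fmode_bv: "fmode p w N (bv c M) = vsum (\<lambda>K. scale (w 0 K) (fmode_b p K N c M)) {K. w 0 K \<noteq> 0}"
  by (simp add: fmode_def linext_bv)

lemma scale_scale: "scale a (scale b v) = scale (a * b) v"
  by (simp add: scale_def fun_eq_iff)

lemma vsum_scale_bv: "vsum (\<lambda>x. scale (f x) (bv c M)) I = scale (\<Sum>x\<in>I. f x) (bv c M)"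
  by (simp add: vsum_def scale_def fun_eq_iff sum_distrib_right)

lemma aprod_zeros: "aprod p (replicate r 0) (bv c M) = scale ((of_nat (2*p) * of_rat c) ^ r) (bv c M)"
proof (induction r)
  case 0
  then show ?case by (simp add: aprod_def scale_def)
next
  case (Suc r)
  have "aprod p (replicate (Suc r) 0) (bv c M) = amode p 0 (aprod p (replicate r 0) (bv c M))"
    by (simp add: aprod_def)
  also have "\<dots> = scale ((of_nat (2*p) * of_rat c) ^ Suc r) (bv c M)"
    unfolding Suc amode_scale amode_zero_bv scale_scale by (simp add: algebra_simps)
  finally show ?case .
qed

lemma sum_sorted_deg: "int (sum_list (sorted_list_of_multiset K)) + int (length (sorted_list_of_multiset K)) = int (deg K)"
proof -
  have "sum_list (sorted_list_of_multiset K) = sum_mset K"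
    by (metis mset_sorted_list_of_multiset sum_mset_sum_list)
  moreover have "length (sorted_list_of_multiset K) = size K"
    by (metis mset_sorted_list_of_multiset size_mset)
  moreover have "deg K = sum_mset K + size K" by (induction K) auto
  ultimately show ?thesis by simp
qed

lemma prod_sorted: "(\<Prod>t<length (sorted_list_of_multiset K). f (sorted_list_of_multiset K ! t))
   = prod_mset (image_mset f K)" for f :: "nat \<Rightarrow> complex"
proof -
  have "(\<Prod>t<length xs. f (xs ! t)) = prod_list (map f xs)" for xs :: "nat list"
    by (simp add: prod.list_conv_set_nth atLeast0LessThan)
  moreover have "prod_list (map f xs) = prod_mset (image_mset f (mset xs))" for xs :: "nat list"
    by (metis mset_map prod_mset_prod_list)
  ultimately show ?thesis by simp
qed


lemma pcoef_nz: "pcoef K \<noteq> 0"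
proof -
  have a: "(\<Prod>x\<in>#K. x + 1) \<noteq> (0::nat)" by (induction K) auto
  have b: "(\<Prod>x\<in>set_mset K. fact (count K x)) \<noteq> (0::nat)" by (simp add: prod_zero_iff)
  show ?thesis unfolding pcoef_def using a b by (simp del: of_nat_fact)
qed

lemma Hset: "p \<ge> 1 \<Longrightarrow> {K. Hvec p 0 K \<noteq> 0} = {K. deg K = 2*p - 1}"
  by (auto simp: Hvec_0 pcoef_nz)

lemma fmode_b_H:
  assumes "p \<ge> 1" "deg K = 2*p - 1"
  shows "fmode_b p K (2 * int p - 2) c {#}
     = scale (prod_mset (image_mset (\<lambda>x. (-1::complex) gchoose x) K) * (of_nat (2*p) * of_rat c) ^ size K) (bv c {#})"
proof -
  define ks where "ks = sorted_list_of_multiset K"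
  define r where "r = length ks"
  have rs: "r = size K" unfolding r_def ks_def by (metis mset_sorted_list_of_multiset size_mset)
  have S: "2 * int p - 2 + 1 - int r - int (sum_list ks) = 0"
    using sum_sorted_deg[of K] assms unfolding r_def ks_def by simp
  have set: "{js. length js = r \<and> set js \<subseteq> {-(\<bar>0\<bar> + int (deg {#}))..\<bar>0\<bar> + int (deg {#})} \<and> sum_list js = 0}
      = {replicate r 0}"
    by (auto simp: replicate_length_same subset_iff sum_list_replicate intro!: replicate_eqI)
  have "fmode_b p K (2 * int p - 2) c {#}
     = vsum (\<lambda>js. scale (\<Prod>t<r. (of_int (- (js ! t) - 1) :: complex) gchoose (ks ! t))
                 (aprod p (filter (\<lambda>j. j < 0) js @ filter (\<lambda>j. 0 \<le> j) js) (bv c {#})))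
       {replicate r 0}"
    unfolding fmode_b_def Let_def ks_def[symmetric] r_def[symmetric] S set by simp
  also have "\<dots> = scale (\<Prod>t<r. (-1 :: complex) gchoose (ks ! t)) (aprod p (replicate r 0) (bv c {#}))"
    by (simp add: vsum_def scale_def)
  also have "\<dots> = scale (prod_mset (image_mset (\<lambda>x. (-1::complex) gchoose x) K) * (of_nat (2*p) * of_rat c) ^ size K) (bv c {#})"
    unfolding aprod_zeros scale_scale rs[symmetric]
    using prod_sorted[of "\<lambda>x. (-1::complex) gchoose x" K] by (simp add: r_def ks_def)
  finally show ?thesis .
qed

lemma H0_bv:
  assumes "p \<ge> 1"
  shows "H0 p (bv c {#}) = scale ((of_nat (2*p) * of_rat c) gchoose (2*p - 1)) (bv c {#})"
proof -
  let ?X = "of_nat (2*p) * of_rat c :: complex"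
  have "H0 p (bv c {#}) = vsum (\<lambda>K. scale (Hvec p 0 K) (fmode_b p K (2 * int p - 2) c {#})) {K. deg K = 2*p - 1}"
    unfolding H0_def fmode_bv Hset[OF assms] ..
  also have "\<dots> = vsum (\<lambda>K. scale (wgt ?X K) (bv c {#})) {K. deg K = 2*p - 1}"
    unfolding vsum_def
    by (intro ext sum.cong refl) (simp add: fmode_b_H[OF assms] Hvec_0[OF assms] scale_scale wgt_def)
  also have "\<dots> = scale (Fp ?X (2*p-1)) (bv c {#})"
    unfolding vsum_scale_bv Fp_def ..
  finally show ?thesis by (simp add: Fp_binom)
qed


lemma sym_sum: "(\<Sum>a\<in>{-int B..int B}. f (nat \<bar>a\<bar>)) = f 0 + 2 * (\<Sum>x<B. f (Suc x) :: complex)"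
proof (induction B)
  case 0
  then show ?case by simp
next
  case (Suc B)
  have e: "nat (1 + int B) = Suc B" "nat (int B + 1) = Suc B" by auto
  have s: "{-int (Suc B)..int (Suc B)} = insert (int (Suc B)) (insert (- int (Suc B)) {-int B..int B})"
    by auto
  have "(\<Sum>a\<in>{-int (Suc B)..int (Suc B)}. f (nat \<bar>a\<bar>)) = f (Suc B) + (f (Suc B) + (\<Sum>a\<in>{-int B..int B}. f (nat \<bar>a\<bar>)))"
    unfolding s by (subst sum.insert; simp add: e)+
  then show ?case using Suc by (simp add: algebra_simps)
qed

lemma amode_zf: "amode p k (\<lambda>_ _. 0) = (\<lambda>_ _. 0)"
  by (simp add: amode_def fun_eq_iff)

lemma fmode_b_gen:
  assumes "ks = sorted_list_of_multiset K" "r = length ks" "S = N + 1 - int r - int (sum_list ks)"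
    "B = \<bar>S\<bar> + int (deg M)"
  shows "fmode_b p K N c M = vsum (\<lambda>js. scale (\<Prod>t<r. (of_int (- (js ! t) - 1) :: complex) gchoose (ks ! t))
                 (aprod p (filter (\<lambda>j. j < 0) js @ filter (\<lambda>j. 0 \<le> j) js) (bv c M)))
       {js. length js = r \<and> set js \<subseteq> {-B..B} \<and> sum_list js = S}"
  unfolding fmode_b_def Let_def assms ..

lemma amode_pair:
  assumes "n \<ge> 1"
  shows "amode p (- int n) (amode p (int n) (bv c M)) = scale (of_nat (2*p) * of_nat n * of_nat (count M (n-1))) (bv c M)"
proof (cases "n - 1 \<in># M")
  case True
  then show ?thesis using assms by (simp add: amode_pos_bv amode_scale amode_neg_bv)
next
  case False
  then have "count M (n-1) = 0" by (simp add: not_in_iff)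
  then show ?thesis using assms by (simp add: amode_pos_bv amode_scale amode_neg_bv scale_def amode_zf)
qed

definition gam :: "nat \<Rightarrow> rat \<Rightarrow> nat multiset \<Rightarrow> nat \<Rightarrow> complex" where
  "gam p c M n = (if n = 0 then (of_nat (2*p) * of_rat c)^2 else of_nat (2*p) * of_nat n * of_nat (count M (n-1)))"

lemma pair_term:
  "aprod p (filter (\<lambda>j. j < 0) [a, -a] @ filter (\<lambda>j. 0 \<le> j) [a, -a]) (bv c M) = scale (gam p c M (nat \<bar>a\<bar>)) (bv c M)"
proof -
  consider "a = 0" | "a > 0" | "a < 0" by linarith
  then show ?thesis
  proof cases
    case 1
    then show ?thesis by (simp add: aprod_def amode_zero_bv amode_scale scale_scale gam_def power2_eq_square)
  next
    case 2
    define n where "n = nat a"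
    have n: "a = int n" "n \<ge> 1" using 2 by (auto simp: n_def)
    then show ?thesis using 2 amode_pair[OF n(2)] by (simp add: aprod_def gam_def)
  next
    case 3
    define n where "n = nat (- a)"
    have n: "a = - int n" "n \<ge> 1" using 3 by (auto simp: n_def)
    then show ?thesis using 3 amode_pair[OF n(2)] by (simp add: aprod_def gam_def)
  qed
qed

lemma len2_set: "{js. length js = 2 \<and> set js \<subseteq> {-B..B} \<and> sum_list js = (0::int)} = (\<lambda>a. [a, -a]) ` {-B..B}"
proof (intro set_eqI iffI)
  fix js assume "js \<in> {js. length js = 2 \<and> set js \<subseteq> {-B..B} \<and> sum_list js = (0::int)}"
  then obtain x y where "js = [x, y]" "x + y = 0" "x \<in> {-B..B}"
    by (auto simp: numeral_2_eq_2 length_Suc_conv)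
  then show "js \<in> (\<lambda>a. [a, -a]) ` {-B..B}" by (auto simp: eq_neg_iff_add_eq_0)
qed auto

lemma fmode_b_00:
  "fmode_b p {#0, 0#} 1 c M = scale ((of_nat (2*p) * of_rat c)^2 + 4 * of_nat p * of_nat (deg M)) (bv c M)"
proof -
  have ks: "sorted_list_of_multiset {#0::nat, 0#} = [0, 0]" by simp
  define B where "B = int (deg M)"
  have "fmode_b p {#0, 0#} 1 c M
     = vsum (\<lambda>js. scale (\<Prod>t<2. (of_int (- (js ! t) - 1) :: complex) gchoose ([0,0] ! t))
                 (aprod p (filter (\<lambda>j. j < 0) js @ filter (\<lambda>j. 0 \<le> j) js) (bv c M)))
       ((\<lambda>a. [a, -a]) ` {-B..B})"
    by (subst len2_set[symmetric], rule fmode_b_gen) (simp_all add: B_def)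
  also have "\<dots> = vsum (\<lambda>a. scale (gam p c M (nat \<bar>a\<bar>)) (bv c M)) {-B..B}"
  proof -
    have one: "(\<Prod>t<2. (of_int (- ([a,-a] ! t) - 1) :: complex) gchoose ([0,0] ! t)) = 1" for a
      by (simp add: numeral_2_eq_2 lessThan_Suc)
    have pt: "scale (\<Prod>t<2. (of_int (- ([a,-a] ! t) - 1) :: complex) gchoose ([0,0] ! t))
       (aprod p (filter (\<lambda>j. j < 0) [a, -a] @ filter (\<lambda>j. 0 \<le> j) [a, -a]) (bv c M))
       = scale (gam p c M (nat \<bar>a\<bar>)) (bv c M)" for a
      by (simp only: one pair_term scale_scale mult_1)
    have inj: "inj_on (\<lambda>a::int. [a, -a]) {-B..B}" by (auto simp: inj_on_def)
    show ?thesis by (simp only: vsum_def sum.reindex[OF inj] comp_def pt)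
  qed
  also have "\<dots> = scale ((of_nat (2*p) * of_rat c)^2 + 2 * (\<Sum>x<deg M. gam p c M (Suc x))) (bv c M)"
    unfolding vsum_scale_bv B_def sym_sum by (simp add: gam_def)
  also have "(\<Sum>x<deg M. gam p c M (Suc x)) = of_nat (2*p) * of_nat (deg M)"
  proof -
    have "(\<Sum>x<deg M. gam p c M (Suc x)) = of_nat (2*p) * of_nat (\<Sum>x<deg M. count M x * (x+1))"
      by (simp add: gam_def sum_distrib_left algebra_simps)
    also have "(\<Sum>x<deg M. count M x * (x+1)) = deg M"
      using deg_elem by (intro deg_count[symmetric]) auto
    finally show ?thesis .
  qed
  finally show ?thesis by (simp add: algebra_simps)
qed

lemma fmode_b_1:
  "fmode_b p {#1#} 1 c M = scale (- (of_nat (2*p) * of_rat c)) (bv c M)"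
proof -
  have ks: "sorted_list_of_multiset {#1::nat#} = [1]" by simp
  have set: "{js. length js = 1 \<and> set js \<subseteq> {-B..B} \<and> sum_list js = (0::int)} = {[0]}" if "B \<ge> 0" for B
    using that by (auto simp: length_Suc_conv)
  have "fmode_b p {#1#} 1 c M
     = vsum (\<lambda>js. scale (\<Prod>t<1. (of_int (- (js ! t) - 1) :: complex) gchoose ([1] ! t))
                 (aprod p (filter (\<lambda>j. j < 0) js @ filter (\<lambda>j. 0 \<le> j) js) (bv c M))) {[0]}"
    by (subst set[of "int (deg M)", symmetric], simp, rule fmode_b_gen) simp_all
  then show ?thesis
    by (simp add: vsum_def aprod_def amode_zero_bv scale_def fun_eq_iff)
qed


definition wt :: "nat \<Rightarrow> rat \<Rightarrow> nat multiset \<Rightarrow> complex" where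
  "wt p c M = of_nat (deg M) + of_nat p * (of_rat c)^2 - (of_nat p - 1) * of_rat c"

lemma omega_set: "p \<ge> 2 \<Longrightarrow> {K. omega p 0 K \<noteq> 0} = {{#0, 0#}, {#1#}}"
  by (auto simp: omega_def)

lemma vsum2: "A \<noteq> B \<Longrightarrow> vsum F {A, B} = (\<lambda>c' M'. F A c' M' + F B c' M')"
  by (simp add: vsum_def)

lemma scale_comb: "(\<lambda>c' M'. scale a (scale b w) c' M' + scale a' (scale b' w) c' M') = scale (a*b + a'*b') w"
  by (simp add: scale_def fun_eq_iff algebra_simps)

lemma L0_bv:
  assumes "p \<ge> 2"
  shows "L0 p (bv c M) = scale (wt p c M) (bv c M)"
proof -
  have ne: "{#0::nat, 0#} \<noteq> {#1#}" by simp
  have "L0 p (bv c M) = vsum (\<lambda>K. scale (omega p 0 K) (fmode_b p K 1 c M)) {{#0, 0#}, {#1#}}"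
    unfolding L0_def fmode_bv omega_set[OF assms] ..
  also have "\<dots> = scale (1 / (4 * of_nat p) * ((of_nat (2*p) * of_rat c)^2 + 4 * of_nat p * of_nat (deg M))
        + (of_nat p - 1) / (2 * of_nat p) * (- (of_nat (2*p) * of_rat c))) (bv c M)"
  proof -
    have om1: "omega p 0 {#0,0#} = 1 / (4 * of_nat p)" by (simp add: omega_def)
    have om2: "omega p 0 {#1#} = (of_nat p - 1) / (2 * of_nat p)" by (simp add: omega_def)
    show ?thesis
      by (simp only: vsum2[OF ne] fmode_b_00 fmode_b_1 om1 om2 scale_comb)
  qed
  also have "\<dots> = scale (wt p c M) (bv c M)"
  proof -
    have "1 / (4 * of_nat p) * ((of_nat (2*p) * of_rat c)^2 + 4 * of_nat p * of_nat (deg M))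
        + (of_nat p - 1) / (2 * of_nat p) * (- (of_nat (2*p) * of_rat c)) = wt p c M"
      using assms unfolding wt_def by (simp add: field_simps power2_eq_square)
    then show ?thesis by simp
  qed
  finally show ?thesis .
qed


lemma L0_gen:
  assumes "p \<ge> 2" "finite (supp v)"
  shows "L0 p v = (\<lambda>c M. wt p c M * v c M)"
proof (intro ext)
  fix c' M'
  have T: "vsum (\<lambda>K. scale (omega p 0 K) (fmode_b p K 1 c M)) {K. omega p 0 K \<noteq> 0} = L0 p (bv c M)" for c M
    by (simp only: L0_def fmode_bv)
  have "L0 p v c' M' = (\<Sum>(c, M)\<in>supp v. v c M * L0 p (bv c M) c' M')"
  proof -
    have "L0 p v = linext (\<lambda>c M. vsum (\<lambda>K. scale (omega p 0 K) (fmode_b p K 1 c M)) {K. omega p 0 K \<noteq> 0}) v"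
      by (simp only: L0_def fmode_def)
    also have "\<dots> = linext (\<lambda>c M. L0 p (bv c M)) v"
      by (simp only: T)
    finally show ?thesis by (simp only: linext_def)
  qed
  also have "\<dots> = (\<Sum>x\<in>supp v. if x = (c', M') then wt p c' M' * v c' M' else 0)"
  proof (intro sum.cong refl)
    fix x assume "x \<in> supp v"
    obtain c M where x: "x = (c, M)" by fastforce
    have "v c M * L0 p (bv c M) c' M' = (if (c, M) = (c', M') then wt p c' M' * v c' M' else 0)"
      unfolding L0_bv[OF assms(1)] scale_apply bv_apply by auto
    then show "(case x of (c, M) \<Rightarrow> v c M * L0 p (bv c M) c' M') = (if x = (c', M') then wt p c' M' * v c' M' else 0)"
      using x by simp
  qed
  also have "\<dots> = wt p c' M' * v c' M'"
    using assms(2) by (simp add: supp_def)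
  finally show "L0 p v c' M' = wt p c' M' * v c' M'" .
qed


lemma exist_l:
  fixes N L a :: int
  assumes "N > 0"
  shows "\<exists>!l. L \<le> l \<and> l \<le> L + N - 1 \<and> (\<exists>s. l = a + N * s)"
proof (rule ex_ex1I)
  define l where "l = L + (a - L) mod N"
  have "l = a + N * (- ((a - L) div N))"
    unfolding l_def using div_mult_mod_eq[of "a - L" N] by (simp add: algebra_simps)
  moreover have "L \<le> l" "l \<le> L + N - 1" unfolding l_def using assms
    using pos_mod_bound[of N "a - L"] pos_mod_sign[of N "a - L"] by auto
  ultimately show "\<exists>l. L \<le> l \<and> l \<le> L + N - 1 \<and> (\<exists>s. l = a + N * s)" by blast
next
  fix l1 l2
  assume 1: "L \<le> l1 \<and> l1 \<le> L + N - 1 \<and> (\<exists>s. l1 = a + N * s)"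
     and 2: "L \<le> l2 \<and> l2 \<le> L + N - 1 \<and> (\<exists>s. l2 = a + N * s)"
  then obtain s1 s2 where s: "l1 = a + N * s1" "l2 = a + N * s2" by blast
  have "N * (s1 - s2) < N * 1" "N * (s2 - s1) < N * 1" using 1 2 s by (auto simp: algebra_simps)
  then have "s1 - s2 < 1" "s2 - s1 < 1" using assms by (simp_all only: mult_less_cancel_left_pos)
  then have "s1 = s2" by simp
  then show "l1 = l2" using s by simp
qed

definition cR :: "nat \<Rightarrow> nat \<Rightarrow> nat \<Rightarrow> int \<Rightarrow> rat" where
  "cR p m i l = (of_int l - of_nat i / of_nat m) / (2 * of_nat p)"

lemma cR_inj: "p \<ge> 1 \<Longrightarrow> cR p m i l = cR p m i l' \<Longrightarrow> l = l'"
  by (simp add: cR_def)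

lemma Rmod_c:
  assumes "p \<ge> 1" "m \<ge> 1"
  shows "(\<exists>s::int. c = (of_nat j - of_nat i / of_nat m) / (2 * of_nat p) + of_nat m * of_int s + of_nat k)
     \<longleftrightarrow> (\<exists>s. c = cR p m i (int j + 2 * int p * (int m * s + int k)))"
proof -
  have "(of_nat j - of_nat i / of_nat m) / (2 * of_nat p) + of_nat m * of_int s + of_nat k
      = cR p m i (int j + 2 * int p * (int m * s + int k))" for s
    using assms unfolding cR_def by (simp add: field_simps)
  then show ?thesis by simp
qed

lemma evec_eq: "evec p m i l = bv (cR p m i l) {#}"
  by (simp add: evec_def cR_def)

lemma evec_Rmod:
  assumes "p \<ge> 1" "m \<ge> 1"
  shows "evec p m i l \<in> Rmod p m i j k \<longleftrightarrow> (\<exists>s. l = int j + 2 * int p * (int m * s + int k))"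
proof -
  have "evec p m i l \<in> Rmod p m i j k \<longleftrightarrow>
     (\<exists>s::int. cR p m i l = (of_nat j - of_nat i / of_nat m) / (2 * of_nat p) + of_nat m * of_int s + of_nat k)"
    unfolding Rmod_def evec_eq mem_Collect_eq supp_bv by (auto simp: bv_apply)
  also have "\<dots> \<longleftrightarrow> (\<exists>s. cR p m i l = cR p m i (int j + 2 * int p * (int m * s + int k)))"
    by (rule Rmod_c[OF assms])
  also have "\<dots> \<longleftrightarrow> (\<exists>s. l = int j + 2 * int p * (int m * s + int k))"
    using cR_inj[OF assms(1)] by blast
  finally show ?thesis .
qed

lemma of_rat_cR: "(of_rat (cR p m i l) :: complex) = (of_int l - of_nat i / of_nat m) / (2 * of_nat p)"
  by (simp add: cR_def of_rat_divide of_rat_diff of_rat_mult)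

lemma of_rat_cR_real: "(of_rat (cR p m i l) :: complex) = of_real ((of_int l - of_nat i / of_nat m) / (2 * of_nat p))"
  by (simp add: of_rat_cR)


lemma sq_lemma:
  fixes a P :: real and t :: int
  assumes "\<bar>a\<bar> < P" "P > 0"
  shows "a^2 \<le> (a + 2 * P * of_int t)^2"
proof -
  consider "t = 0" | "t \<ge> 1" | "t \<le> -1" by linarith
  then have "\<bar>a\<bar> \<le> \<bar>a + 2 * P * of_int t\<bar>"
  proof cases
    case 1 then show ?thesis by simp
  next
    case 2
    then have "(1::real) \<le> of_int t" by simp
    then have "2 * P * 1 \<le> 2 * P * of_int t" using assms by (intro mult_left_mono) auto
    then show ?thesis using assms by linarith
  next
    case 3
    then have "of_int t \<le> (-1::real)" by simp
    then have "2 * P * of_int t \<le> 2 * P * (-1)" using assms by (intro mult_left_mono) auto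
    then show ?thesis using assms by linarith
  qed
  then show ?thesis by (simp add: abs_le_square_iff)
qed

lemma real_ineq:
  fixes y y' d P :: real
  assumes "(y - (P - 1))^2 \<le> (y' - (P - 1))^2" "d \<ge> 0" "P > 0"
  shows "((P - (y + 1))^2 - (P - 1)^2) / (4 * P) \<le> d + P * (y' / (2 * P))^2 - (P - 1) * (y' / (2 * P))"
proof -
  have l: "((P - (y + 1))^2 - (P - 1)^2) / (4 * P) = ((y - (P - 1))^2 - (P - 1)^2) / (4 * P)"
    by (simp add: power2_eq_square algebra_simps)
  have r: "d + P * (y' / (2 * P))^2 - (P - 1) * (y' / (2 * P)) = d + ((y' - (P - 1))^2 - (P - 1)^2) / (4 * P)"
    using assms(3) by (simp add: power2_eq_square field_simps)
  have "((y - (P - 1))^2 - (P - 1)^2) / (4 * P) \<le> ((y' - (P - 1))^2 - (P - 1)^2) / (4 * P)"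
    using assms by (intro divide_right_mono) auto
  then show ?thesis unfolding l r using assms(2) by linarith
qed


theorem mainTheorem13:
  fixes p m i j k :: nat
  assumes "p \<ge> 2" and "m \<ge> 2" and "1 \<le> i" and "i \<le> m - 1"
    and "j \<le> 2 * p - 1" and "k \<le> m - 1"
  shows "(\<exists>!l::int. - (int m - 1) * int p \<le> l \<and> l \<le> (int m + 1) * int p - 1
              \<and> evec p m i l \<in> Rmod p m i j k)
       \<and> (\<forall>l::int. - (int m - 1) * int p \<le> l \<and> l \<le> (int m + 1) * int p - 1
              \<and> evec p m i l \<in> Rmod p m i j k \<longrightarrow>
            (let x = (of_int l - of_nat i / of_nat m :: complex);
                 h = hrs p (x + 1) 1 in
              L0 p (evec p m i l) = scale h (evec p m i l)
            \<and> H0 p (evec p m i l) = scale (x gchoose (2 * p - 1)) (evec p m i l)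
            \<and> (\<forall>v \<mu>. v \<in> Rmod p m i j k \<and> v \<noteq> zvec \<and> L0 p v = scale \<mu> v
                  \<longrightarrow> Re h \<le> Re \<mu>)))"
proof -
  have p1: "p \<ge> 1" and m1: "m \<ge> 1" using assms by auto
  have R: "evec p m i l \<in> Rmod p m i j k \<longleftrightarrow> (\<exists>s. l = (int j + 2 * int p * int k) + (2 * int p * int m) * s)" for l
    unfolding evec_Rmod[OF p1 m1] by (simp add: algebra_simps)
  have top: "- (int m - 1) * int p + 2 * int p * int m - 1 = (int m + 1) * int p - 1"
    by (simp add: algebra_simps)
  have N0: "2 * int p * int m > 0" using p1 m1 by simp
  show ?thesis
  proof (intro conjI allI impI)
    show "\<exists>!l::int. - (int m - 1) * int p \<le> l \<and> l \<le> (int m + 1) * int p - 1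
              \<and> evec p m i l \<in> Rmod p m i j k"
      using exist_l[OF N0, of "- (int m - 1) * int p" "int j + 2 * int p * int k"]
      unfolding R top .
  next
    fix l :: int
    assume l: "- (int m - 1) * int p \<le> l \<and> l \<le> (int m + 1) * int p - 1 \<and> evec p m i l \<in> Rmod p m i j k"
    define y :: real where "y = of_int l - of_nat i / of_nat m"
    define x :: complex where "x = of_int l - of_nat i / of_nat m"
    have xy: "x = of_real y" by (simp add: x_def y_def)
    have c: "(of_rat (cR p m i l) :: complex) = of_real (y / (2 * of_nat p))"
      by (simp add: of_rat_cR_real y_def)
    have X: "of_nat (2*p) * of_rat (cR p m i l) = x"
      using p1 unfolding c xy by (simp add: field_simps)
    have hreal: "hrs p (x + 1) 1 = of_real (((of_nat p - (y + 1))^2 - (of_nat p - 1)^2) / (4 * of_nat p))"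
      unfolding xy hrs_def by simp
    have L: "L0 p (evec p m i l) = scale (hrs p (x + 1) 1) (evec p m i l)"
    proof -
      have "wt p (cR p m i l) {#} = hrs p (x + 1) 1"
        unfolding wt_def hreal c using p1 by (simp add: field_simps power2_eq_square)
      then show ?thesis unfolding evec_eq L0_bv[OF assms(1)] by simp
    qed
    have H: "H0 p (evec p m i l) = scale (x gchoose (2 * p - 1)) (evec p m i l)"
      unfolding evec_eq H0_bv[OF p1] X ..
    have min: "Re (hrs p (x + 1) 1) \<le> Re \<mu>"
      if v: "v \<in> Rmod p m i j k" "v \<noteq> zvec" "L0 p v = scale \<mu> v" for v \<mu>
    proof -
      obtain c M where vcM: "v c M \<noteq> 0" using v(2) by (auto simp: zvec_def fun_eq_iff)
      have fin: "finite (supp v)" using v(1) by (simp add: Rmod_def)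
      have "wt p c M * v c M = \<mu> * v c M"
        using fun_cong[OF fun_cong[OF v(3), of c], of M] unfolding L0_gen[OF assms(1) fin] scale_def by simp
      then have mu: "\<mu> = wt p c M" using vcM by simp
      obtain s where "c = (of_nat j - of_nat i / of_nat m) / (2 * of_nat p) + of_nat m * of_int s + of_nat k"
        using v(1) vcM by (auto simp: Rmod_def)
      then obtain s' where cs: "c = cR p m i (int j + 2 * int p * (int m * s' + int k))"
        using Rmod_c[OF p1 m1] by blast
      define l' where "l' = int j + 2 * int p * (int m * s' + int k)"
      obtain s where ls: "l = int j + 2 * int p * (int m * s + int k)" using l evec_Rmod[OF p1 m1] by blast
      define y' :: real where "y' = of_int l' - of_nat i / of_nat m"
      have c': "(of_rat c :: complex) = of_real (y' / (2 * of_nat p))"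
        by (simp add: cs of_rat_cR_real y'_def l'_def)
      have wreal: "wt p c M = of_real (of_nat (deg M) + of_nat p * (y' / (2 * of_nat p))^2 - (of_nat p - 1) * (y' / (2 * of_nat p)))"
        unfolding wt_def c' by simp
      define P :: real where "P = of_nat m * of_nat p"
      have im: "0 < real i / real m" "real i / real m < 1" using assms by (auto simp: field_simps)
      have ab: "\<bar>y - (of_nat p - 1)\<bar> < P"
      proof -
        have a1: "of_int (- (int m - 1) * int p) \<le> (of_int l :: real)"
          using l by (simp only: of_int_le_iff)
        have a2: "(of_int l :: real) \<le> of_int ((int m + 1) * int p - 1)"
          using l by (simp only: of_int_le_iff)
        have "real_of_int l \<ge> - (real m - 1) * real p" "real_of_int l \<le> (real m + 1) * real p - 1"
          using a1 a2 by simp_all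
        then show ?thesis unfolding y_def P_def using im by (auto simp: algebra_simps abs_less_iff)
      qed
      have yy: "y' - (of_nat p - 1) = (y - (of_nat p - 1)) + 2 * P * of_int (s' - s)"
        unfolding y'_def y_def P_def l'_def ls by (simp add: algebra_simps)
      have P0: "P > 0" using p1 m1 by (simp add: P_def)
      have sq: "(y - (of_nat p - 1))^2 \<le> (y' - (of_nat p - 1))^2"
        unfolding yy using sq_lemma[OF ab P0] .
      have "((of_nat p - (y + 1))^2 - (of_nat p - 1)^2) / (4 * of_nat p)
          \<le> of_nat (deg M) + of_nat p * (y' / (2 * of_nat p))^2 - (of_nat p - 1) * (y' / (2 * of_nat p))"
        using real_ineq[OF sq, of "of_nat (deg M)"] p1 by simp
      then show ?thesis unfolding mu wreal hreal by simp
    qed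
    show "let x = (of_int l - of_nat i / of_nat m :: complex);
                 h = hrs p (x + 1) 1 in
              L0 p (evec p m i l) = scale h (evec p m i l)
            \<and> H0 p (evec p m i l) = scale (x gchoose (2 * p - 1)) (evec p m i l)
            \<and> (\<forall>v \<mu>. v \<in> Rmod p m i j k \<and> v \<noteq> zvec \<and> L0 p v = scale \<mu> v
                  \<longrightarrow> Re h \<le> Re \<mu>)"
      unfolding Let_def x_def[symmetric] using L H min by blast
  qed
qed

end
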